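(* Let $\mathfrak A=\langle A,f,g\rangle$ be a betweenness algebra with at least four elements. Then $\{0,1\}$ is the universe of a subalgebra of $\mathfrak A$ that is isomorphic to the two-element algebra $\mathfrak A_1=\langle\{0,1\},f_1,g_1\rangle$ with $f_1(0,0)=f_1(0,1)=f_1(1,0)=0$, $f_1(1,1)=1$ and $g_1(0,0)=g_1(0,1)=g_1(1,0)=1$, $g_1(1,1)=0$.
   Context: A PS-algebra is $\langle A,f,g\rangle$ where $A$ is a Boolean algebra with at least two elements (operations $+,\cdot,-,0,1$) and $f,g\colon A^2\to A$ satisfy: $f(x,y)=0$ whenever $x=0$ or $y=0$; $f$ is additive in each argument; $g(x,y)=1$ whenever $x=0$ or $y=0$; $g$ is co-additive in each argument ($g(x+x',y)=g(x,y)\cdot g(x',y)$, $g(x,y+y')=g(x,y)\cdot g(x,y')$). A betweenness algebra is a PS-algebra satisfying for all $x,y,z$: (ABT0) $x\leq f(x,x)$; (ABT1$_f$) $f(x,y)\leq f(y,x)$; (ABT1$_g$) $g(x,y)\leq g(y,x)$; (ABT2) $y\cdot f(x,z)\leq f(x\cdot f(x,y),z)$; (ABT3) $f(x,g(x,-y)\cdot y)\leq y$; (wMIA) if $x\neq0$ and $y\neq0$ then $g(x,y)\leq f(x,y)$. *)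

theory Defs
  imports Main
begin

text \<open>The Boolean algebra A is the type 'a of class boolean_algebra
 (sup = +, inf = \<cdot>, uminus = -, bot = 0, top = 1).\<close>

definition PS_algebra :: "('a::boolean_algebra \<Rightarrow> 'a \<Rightarrow> 'a) \<Rightarrow> ('a \<Rightarrow> 'a \<Rightarrow> 'a) \<Rightarrow> bool" where
  "PS_algebra f g \<longleftrightarrow>
     (bot::'a) \<noteq> top \<and>
     (\<forall>x y. (x = bot \<or> y = bot) \<longrightarrow> f x y = bot) \<and>
     (\<forall>x x' y. f (sup x x') y = sup (f x y) (f x' y)) \<and>
     (\<forall>x y y'. f x (sup y y') = sup (f x y) (f x y')) \<and>
     (\<forall>x y. (x = bot \<or> y = bot) \<longrightarrow> g x y = top) \<and>
     (\<forall>x x' y. g (sup x x') y = inf (g x y) (g x' y)) \<and>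
     (\<forall>x y y'. g x (sup y y') = inf (g x y) (g x y'))"

definition betweenness_algebra :: "('a::boolean_algebra \<Rightarrow> 'a \<Rightarrow> 'a) \<Rightarrow> ('a \<Rightarrow> 'a \<Rightarrow> 'a) \<Rightarrow> bool" where
  "betweenness_algebra f g \<longleftrightarrow>
     PS_algebra f g \<and>
     (\<forall>x. x \<le> f x x) \<and>
     (\<forall>x y. f x y \<le> f y x) \<and>
     (\<forall>x y. g x y \<le> g y x) \<and>
     (\<forall>x y z. inf y (f x z) \<le> f (inf x (f x y)) z) \<and>
     (\<forall>x y. f x (inf (g x (- y)) y) \<le> y) \<and>
     (\<forall>x y. x \<noteq> bot \<and> y \<noteq> bot \<longrightarrow> g x y \<le> f x y)"

definition subuniverse :: "('a::boolean_algebra \<Rightarrow> 'a \<Rightarrow> 'a) \<Rightarrow> ('a \<Rightarrow> 'a \<Rightarrow> 'a) \<Rightarrow> 'a set \<Rightarrow> bool" where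
  "subuniverse f g S \<longleftrightarrow>
     bot \<in> S \<and> top \<in> S \<and>
     (\<forall>x\<in>S. - x \<in> S) \<and>
     (\<forall>x\<in>S. \<forall>y\<in>S. sup x y \<in> S \<and> inf x y \<in> S \<and> f x y \<in> S \<and> g x y \<in> S)"

text \<open>The two-element algebra A_1 on bool (False = 0, True = 1).\<close>
definition f1 :: "bool \<Rightarrow> bool \<Rightarrow> bool" where
  "f1 x y = (x \<and> y)"

definition g1 :: "bool \<Rightarrow> bool \<Rightarrow> bool" where
  "g1 x y = (\<not> (x \<and> y))"

definition iso_from_A1 :: "('a::boolean_algebra \<Rightarrow> 'a \<Rightarrow> 'a) \<Rightarrow> ('a \<Rightarrow> 'a \<Rightarrow> 'a) \<Rightarrow> 'a set \<Rightarrow> (bool \<Rightarrow> 'a) \<Rightarrow> bool" where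
  "iso_from_A1 f g S h \<longleftrightarrow>
     bij_betw h UNIV S \<and>
     h False = bot \<and> h True = top \<and>
     (\<forall>x. h (\<not> x) = - h x) \<and>
     (\<forall>x y. h (x \<or> y) = sup (h x) (h y)) \<and>
     (\<forall>x y. h (x \<and> y) = inf (h x) (h y)) \<and>
     (\<forall>x y. h (f1 x y) = f (h x) (h y)) \<and>
     (\<forall>x y. h (g1 x y) = g (h x) (h y))"

end

theory Submission
  imports Defs
begin

lemma PS_D:
  assumes "PS_algebra f g"
  shows "(bot::'a::boolean_algebra) \<noteq> top"
    and "\<forall>x y. (x = bot \<or> y = bot) \<longrightarrow> f x y = (bot::'a)"
    and "\<forall>x x' y. f (sup x x') y = sup (f x y) (f x' y)"
    and "\<forall>x y y'. f x (sup y y') = sup (f x y) (f x y')"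
    and "\<forall>x y. (x = bot \<or> y = bot) \<longrightarrow> g x y = top"
    and "\<forall>x x' y. g (sup x x') y = inf (g x y) (g x' y)"
    and "\<forall>x y y'. g x (sup y y') = inf (g x y) (g x y')"
  using assms unfolding PS_algebra_def apply -
  by (elim conjE, assumption)+

lemma BA_D:
  assumes "betweenness_algebra f g"
  shows "PS_algebra f g"
    and "\<forall>x::'a::boolean_algebra. x \<le> f x x"
    and "\<forall>x y z. inf y (f x z) \<le> f (inf x (f x y)) z"
    and "\<forall>x y. f x (inf (g x (- y)) y) \<le> y"
    and "\<forall>x y. x \<noteq> bot \<and> y \<noteq> bot \<longrightarrow> g x y \<le> f x y"
  using assms unfolding betweenness_algebra_def apply -
  by (elim conjE, assumption)+

lemma PS_f0: "PS_algebra f g \<Longrightarrow> x = bot \<or> y = bot \<Longrightarrow> f x y = bot"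
  using PS_D(2) by blast

lemma PS_g0: "PS_algebra f g \<Longrightarrow> x = bot \<or> y = bot \<Longrightarrow> g x y = top"
  using PS_D(5) by blast

lemma g_anti1:
  assumes "PS_algebra f g" "(x::'a::boolean_algebra) \<le> x'"
  shows "g x' y \<le> g x y"
proof -
  have "g x' y = g (sup x x') y" using assms(2) by (simp add: sup_absorb2)
  also have "\<dots> = inf (g x y) (g x' y)" using PS_D(6)[OF assms(1)] by blast
  finally show ?thesis by (metis inf.cobounded1)
qed

lemma g_anti2:
  assumes "PS_algebra f g" "(y::'a::boolean_algebra) \<le> y'"
  shows "g x y' \<le> g x y"
proof -
  have "g x y' = g x (sup y y')" using assms(2) by (simp add: sup_absorb2)
  also have "\<dots> = inf (g x y) (g x y')" using PS_D(7)[OF assms(1)] by blast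
  finally show ?thesis by (metis inf.cobounded1)
qed

lemma g11:
  fixes f g :: "'a::boolean_algebra \<Rightarrow> 'a \<Rightarrow> 'a"
  assumes B: "betweenness_algebra f g"
    and y: "(y::'a) \<noteq> bot" "y \<noteq> top"
  shows "g top top = bot"
proof (rule ccontr)
  assume c0: "g top top \<noteq> bot"
  define c where "c = g top top"
  have PS: "PS_algebra f g" using BA_D(1)[OF B] .
  have bt0: "(top::'a) \<noteq> bot" using PS_D(1)[OF PS] by simp
  have A2: "\<And>x y z. inf y (f x z) \<le> f (inf x (f x y)) z"
    using BA_D(3)[OF B] by blast
  have A3: "\<And>x y. f x (inf (g x (- y)) y) \<le> y"
    using BA_D(4)[OF B] by blast
  have W: "\<And>x y. x \<noteq> bot \<Longrightarrow> y \<noteq> bot \<Longrightarrow> g x y \<le> f x y"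
    using BA_D(5)[OF B] by blast
  have cle: "c \<le> g x z" for x z
    unfolding c_def by (rule order_trans[OF g_anti1[OF PS top_greatest] g_anti2[OF PS top_greatest]])
  have c1: "c \<noteq> top"
  proof
    assume ct: "c = top"
    have "f top (inf (g top (- y)) y) \<le> y" by (rule A3)
    moreover have "g top (- y) = top" using cle[of top "-y"] ct by (simp add: top_unique)
    ultimately have "f top y \<le> y" by simp
    moreover have "g top y \<le> f top y" using y W bt0 by simp
    moreover have "g top y = top" using cle[of top y] ct by (simp add: top_unique)
    ultimately show False using y by (simp add: top_unique)
  qed
  have B1: "f (- c) c \<le> c"
  proof -
    have "f (- c) (inf (g (- c) (- c)) c) \<le> c" by (rule A3)
    moreover have "inf (g (- c) (- c)) c = c" using cle by (simp add: inf_absorb2)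
    ultimately show ?thesis by simp
  qed
  have "inf c (f (- c) (- c)) \<le> f (inf (- c) (f (- c) c)) (- c)"
    by (rule A2)
  moreover have "inf (- c) (f (- c) c) = bot"
  proof -
    have "inf (- c) (f (- c) c) \<le> inf (- c) c" by (rule inf_mono[OF order_refl B1])
    thus ?thesis by (simp add: bot_unique)
  qed
  moreover have "f bot (- c) = bot" using PS_f0[OF PS] by simp
  ultimately have C: "inf c (f (- c) (- c)) = bot" by (simp add: bot_unique)
  have "- c \<noteq> bot" using c1 by (metis compl_bot_eq double_compl)
  hence "g (- c) (- c) \<le> f (- c) (- c)" using W by simp
  hence "c \<le> f (- c) (- c)" using cle order_trans by blast
  hence "c = bot" using C by (simp add: inf_absorb1)
  thus False using c0 c_def by simp
qed

theorem theorem45: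
  fixes f g :: "'a::boolean_algebra \<Rightarrow> 'a \<Rightarrow> 'a"
  assumes "betweenness_algebra f g"
    and "\<exists>a b c d :: 'a. distinct [a, b, c, d]"
  shows "subuniverse f g {bot, top} \<and> (\<exists>h. iso_from_A1 f g {bot, top} h)"
proof -
  have PS: "PS_algebra f g" using BA_D(1)[OF assms(1)] .
  have bt: "(bot::'a) \<noteq> top" using PS_D(1)[OF PS] .
  obtain a b c d :: 'a where abcd: "distinct [a, b, c, d]" using assms(2) by blast
  have "\<exists>y::'a. y \<noteq> bot \<and> y \<noteq> top"
  proof (cases "a \<noteq> bot \<and> a \<noteq> top")
    case True then show ?thesis by blast
  next
    case False
    show ?thesis
    proof (cases "b \<noteq> bot \<and> b \<noteq> top")
      case True then show ?thesis by blast
    next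
      case False2: False
      have "c \<noteq> bot \<and> c \<noteq> top" using False False2 abcd by auto
      then show ?thesis by blast
    qed
  qed
  then obtain y :: 'a where y: "y \<noteq> bot" "y \<noteq> top" by blast
  have G11: "g top top = bot" using g11[OF assms(1) y] .
  have "\<forall>x::'a. x \<le> f x x" using BA_D(2)[OF assms(1)] .
  hence "top \<le> f top top" by (rule spec)
  hence F11: "f top top = top" by (rule top_unique[THEN iffD1])
  have F0: "f x y = bot" if "x = bot \<or> y = bot" for x y
    using PS_f0[OF PS that] .
  have G0: "g x y = top" if "x = bot \<or> y = bot" for x y
    using PS_g0[OF PS that] .
  have sub: "subuniverse f g {bot, top}"
    unfolding subuniverse_def using F11 G11 F0 G0 by auto
  define h where "h = (\<lambda>b. if b then (top::'a) else bot)"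
  have "iso_from_A1 f g {bot, top} h"
  proof -
    have "bij_betw h UNIV {bot, top}"
      unfolding bij_betw_def inj_on_def h_def using bt by (auto simp: image_def)
    moreover have "\<forall>x. h (\<not> x) = - h x" unfolding h_def by simp
    moreover have "\<forall>x y. h (x \<or> y) = sup (h x) (h y)" unfolding h_def by simp
    moreover have "\<forall>x y. h (x \<and> y) = inf (h x) (h y)" unfolding h_def by simp
    moreover have "\<forall>x y. h (f1 x y) = f (h x) (h y)" unfolding h_def f1_def using F11 F0 by simp
    moreover have "\<forall>x y. h (g1 x y) = g (h x) (h y)" unfolding h_def g1_def using G11 G0 by simp
    ultimately show ?thesis unfolding iso_from_A1_def by (simp add: h_def)
  qed
  thus ?thesis using sub by blast
qed

end
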